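(* Let $\delta=x^{\mathbf d}f(\theta)$ be a homogeneous differential operator of degree $\mathbf d$ with $\mathbf d\neq\mathbf 0$, $-\mathbf d\in S$, $\mathbf d=q\mathbf e$ ($q\in\mathbb Z_{\ge1}$, $\mathbf e$ primitive). If $\delta$ fixes a nonzero monomial ideal $I$, then there exists a subset $\mathcal B\subseteq\mathbb N^n$ compatible with $\mathbf d$ such that (1) $\operatorname{val}(\mathbf a)>-\infty$ for all $\mathbf a\in W_{\mathcal B}$; (2) for all $\mathbf a\in V'_{\mathrm{mon}}(f)\cap W_{\mathcal B}$ and $i=0,\dots,q-1$, $\mathbf a-i\mathbf e\in V_{\mathrm{mon}}(f)$; (3) for all $\mathbf a,\mathbf b\in V'_{\mathrm{mon}}(f)\cap W_{\mathcal B}$, $\mathbf a-\mathbf b\notin S-\mathbf e$; and (4) $I=(x^{\mathbf a}\mid\mathbf a\in V'_{\mathrm{mon}}(f)\cap W_{\mathcal B})$ and $\operatorname{Exp} I=\{\mathbf a\in W_{\mathcal B}:\operatorname{pval}(\mathbf a)\ge0\}$.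
   Context: Standing notation. Fix $d\ge 1$. Let $\sigma\subseteq\mathbb R^d$ be a full-dimensional, strongly convex rational polyhedral cone, so $\sigma^\vee$ is full-dimensional and strongly convex. $S=\sigma^\vee\cap\mathbb Z^d$, $R=\mathbb C[S]$ with monomial basis $x^{\mathbf a}$, $\mathbf a\in S$. $h_1,\dots,h_n$ are the primitive support functions of the facets of $\sigma^\vee$, so $S=\{\mathbf a\in\mathbb Z^d:h_i(\mathbf a)\ge0\ \forall i\}$. $(g,m)!=\prod_{j=0}^m(g-j)$ for $m\ge0$, $=1$ for $m<0$; $H_{\mathbf d}=\prod_i(h_i,h_i(-\mathbf d)-1)!$. For $f$ divisible by $H_{\mathbf d}$, $\delta=x^{\mathbf d}f(\theta)$ acts by $\delta(x^{\mathbf a})=f(\mathbf a)x^{\mathbf a+\mathbf d}$. $\operatorname{Exp} I=\{\mathbf a\in S:x^{\mathbf a}\in I\}$; $I$ is $\delta$-fixed if $\delta(I)=I$. $V_{\mathrm{mon}}(f)=\{\mathbf a\in\mathbb Z^d:f(\mathbf a)=0\}$; $S-\mathbf e=\{\mathbf s-\mathbf e:\mathbf s\in S\}$. For $\mathbf a\in\mathbb Z^d$, $\operatorname{val}(\mathbf a)=\inf\{t\in\mathbb R:\mathbf a+t\mathbf d\in V_{\mathrm{mon}}(f)\}\in\mathbb R\cup\{\pm\infty\}$ ($\inf\emptyset=+\infty$). When $\operatorname{val}(\mathbf a)$ is finite, $\operatorname{pval}(\mathbf a)=\max\{t\in[\operatorname{val}(\mathbf a),\operatorname{val}(\mathbf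 a)+1):\mathbf a+t\mathbf d\in V_{\mathrm{mon}}(f)\}$ and $\operatorname{vpt}(\mathbf a)=\mathbf a+\operatorname{pval}(\mathbf a)\mathbf d$. $V'_{\mathrm{mon}}(f)=\{\operatorname{vpt}(\mathbf a):\mathbf a\in\mathbb Z^d,\ \operatorname{val}(\mathbf a)\text{ finite}\}$. A tuple $\beta\in\mathbb N^n$ is compatible with $\mathbf d$ if for every $i$, $\beta_i=0$ or $h_i(\mathbf d)=0$; $\mathcal B\subseteq\mathbb N^n$ is compatible with $\mathbf d$ if each element is. $W_\beta=\{\mathbf a\in S: h_i(\mathbf a)\ge\beta_i\ \forall i\}$, $W_{\mathcal B}=\bigcup_{\beta\in\mathcal B}W_\beta$. *)

theory Defs
  imports "HOL-Analysis.Analysis" "HOL-Library.Poly_Mapping" "HOL-Library.Extended_Real"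
begin

definition rvec :: "int ^ 'd \<Rightarrow> real ^ 'd" where
  "rvec a = (\<chi> k. real_of_int (a $ k))"

definition cvec :: "int ^ 'd \<Rightarrow> complex ^ 'd" where
  "cvec a = (\<chi> k. complex_of_int (a $ k))"

definition hv :: "int ^ 'd \<Rightarrow> int ^ 'd \<Rightarrow> int" where
  "hv h a = (\<Sum>k\<in>UNIV. h $ k * a $ k)"

definition primitive_vec :: "int ^ 'd \<Rightarrow> bool" where
  "primitive_vec v \<longleftrightarrow> (\<forall>k::int. (\<forall>i. k dvd v $ i) \<longrightarrow> is_unit k)"

definition rat_poly_cone :: "(real ^ 'd) set \<Rightarrow> bool" where
  "rat_poly_cone \<sigma> \<longleftrightarrow> (\<exists>G::(int ^ 'd) set. finite G \<and>
      \<sigma> = {(\<Sum>g\<in>G. c g *\<^sub>R rvec g) | c. \<forall>g\<in>G. 0 \<le> c g})"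

definition strongly_convex :: "(real ^ 'd) set \<Rightarrow> bool" where
  "strongly_convex \<sigma> \<longleftrightarrow> \<sigma> \<inter> uminus ` \<sigma> = {0}"

definition full_dim :: "(real ^ 'd) set \<Rightarrow> bool" where
  "full_dim \<sigma> \<longleftrightarrow> interior \<sigma> \<noteq> {}"

definition dual_cone :: "(real ^ 'd) set \<Rightarrow> (real ^ 'd) set" where
  "dual_cone \<sigma> = {u. \<forall>v\<in>\<sigma>. 0 \<le> u \<bullet> v}"

definition facet_support_functions :: "(real ^ 'd) set \<Rightarrow> (int ^ 'd) set" where
  "facet_support_functions C = {v. primitive_vec v \<and>
      (\<exists>F. F face_of C \<and> aff_dim F = int CARD('d) - 1 \<and>
           (\<forall>u\<in>C. 0 \<le> rvec v \<bullet> u) \<and> (\<forall>u\<in>F. rvec v \<bullet> u = 0))}"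

definition toric_setup :: "(real ^ 'd) set \<Rightarrow> ('i::finite \<Rightarrow> int ^ 'd) \<Rightarrow> bool" where
  "toric_setup \<sigma> h \<longleftrightarrow> rat_poly_cone \<sigma> \<and> full_dim \<sigma> \<and> strongly_convex \<sigma> \<and>
     bij_betw h UNIV (facet_support_functions (dual_cone \<sigma>))"

definition semigrp :: "(real ^ 'd) set \<Rightarrow> (int ^ 'd) set" where
  "semigrp \<sigma> = {a. rvec a \<in> dual_cone \<sigma>}"

section \<open>The ring R = C[S] inside the group ring C[Z^d]\<close>

type_synonym 'd laurent = "(int ^ 'd) \<Rightarrow>\<^sub>0 complex"

definition Rring :: "(real ^ 'd) set \<Rightarrow> 'd laurent set" where
  "Rring \<sigma> = {p. Poly_Mapping.keys p \<subseteq> semigrp \<sigma>}"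

definition xmon :: "int ^ 'd \<Rightarrow> 'd laurent" where
  "xmon a = Poly_Mapping.single a 1"

definition is_ideal :: "(real ^ 'd) set \<Rightarrow> 'd laurent set \<Rightarrow> bool" where
  "is_ideal \<sigma> J \<longleftrightarrow> J \<subseteq> Rring \<sigma> \<and> 0 \<in> J \<and> (\<forall>p\<in>J. \<forall>q\<in>J. p + q \<in> J) \<and>
      (\<forall>r\<in>Rring \<sigma>. \<forall>p\<in>J. r * p \<in> J)"

definition ideal_gen :: "(real ^ 'd) set \<Rightarrow> 'd laurent set \<Rightarrow> 'd laurent set" where
  "ideal_gen \<sigma> G = \<Inter>{J. is_ideal \<sigma> J \<and> G \<subseteq> J}"

definition monomial_ideal :: "(real ^ 'd) set \<Rightarrow> 'd laurent set \<Rightarrow> bool" where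
  "monomial_ideal \<sigma> I \<longleftrightarrow> is_ideal \<sigma> I \<and> I = ideal_gen \<sigma> {xmon a | a. xmon a \<in> I}"

definition Exp :: "(real ^ 'd) set \<Rightarrow> 'd laurent set \<Rightarrow> (int ^ 'd) set" where
  "Exp \<sigma> I = {a \<in> semigrp \<sigma>. xmon a \<in> I}"

text \<open>Polynomial functions C^d -> C (C is infinite, so these are the polynomials).\<close>
definition poly_fun :: "(complex ^ 'd \<Rightarrow> complex) \<Rightarrow> bool" where
  "poly_fun f \<longleftrightarrow> (\<exists>c :: ('d \<Rightarrow> nat) \<Rightarrow> complex. finite {\<alpha>. c \<alpha> \<noteq> 0} \<and>
      (\<forall>z. f z = (\<Sum>\<alpha>\<in>{\<alpha>. c \<alpha> \<noteq> 0}. c \<alpha> * (\<Prod>k\<in>UNIV. (z $ k) ^ (\<alpha> k)))))"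

definition poly_dvd :: "(complex ^ 'd \<Rightarrow> complex) \<Rightarrow> (complex ^ 'd \<Rightarrow> complex) \<Rightarrow> bool" where
  "poly_dvd g f \<longleftrightarrow> (\<exists>u. poly_fun u \<and> (\<forall>z. f z = g z * u z))"

definition ffact :: "complex \<Rightarrow> int \<Rightarrow> complex" where
  "ffact g m = (if m < 0 then 1 else (\<Prod>j\<in>{0..nat m}. g - of_nat j))"

definition hpoly :: "int ^ 'd \<Rightarrow> complex ^ 'd \<Rightarrow> complex" where
  "hpoly h z = (\<Sum>k\<in>UNIV. complex_of_int (h $ k) * z $ k)"

definition Hd :: "('i::finite \<Rightarrow> int ^ 'd) \<Rightarrow> int ^ 'd \<Rightarrow> complex ^ 'd \<Rightarrow> complex" where
  "Hd h d z = (\<Prod>i\<in>UNIV. ffact (hpoly (h i) z) (hv (h i) (- d) - 1))"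

text \<open>delta = x^d f(theta): delta(x^a) = f(a) x^(a+d), extended linearly.\<close>
definition delta :: "int ^ 'd \<Rightarrow> (complex ^ 'd \<Rightarrow> complex) \<Rightarrow> 'd laurent \<Rightarrow> 'd laurent" where
  "delta d f p = (\<Sum>a\<in>Poly_Mapping.keys p. Poly_Mapping.single (a + d) (Poly_Mapping.lookup p a * f (cvec a)))"

definition Vmon :: "(complex ^ 'd \<Rightarrow> complex) \<Rightarrow> (int ^ 'd) set" where
  "Vmon f = {a. f (cvec a) = 0}"

definition line_zeros :: "int ^ 'd \<Rightarrow> (complex ^ 'd \<Rightarrow> complex) \<Rightarrow> int ^ 'd \<Rightarrow> real set" where
  "line_zeros d f a = {t. \<exists>z\<in>Vmon f. rvec z = rvec a + t *\<^sub>R rvec d}"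

definition val :: "int ^ 'd \<Rightarrow> (complex ^ 'd \<Rightarrow> complex) \<Rightarrow> int ^ 'd \<Rightarrow> ereal" where
  "val d f a = Inf (ereal ` line_zeros d f a)"

definition pval :: "int ^ 'd \<Rightarrow> (complex ^ 'd \<Rightarrow> complex) \<Rightarrow> int ^ 'd \<Rightarrow> real" where
  "pval d f a = Max {t \<in> line_zeros d f a.
      real_of_ereal (val d f a) \<le> t \<and> t < real_of_ereal (val d f a) + 1}"

definition vpt :: "int ^ 'd \<Rightarrow> (complex ^ 'd \<Rightarrow> complex) \<Rightarrow> int ^ 'd \<Rightarrow> int ^ 'd" where
  "vpt d f a = (THE z. rvec z = rvec a + pval d f a *\<^sub>R rvec d)"

definition Vmon' :: "int ^ 'd \<Rightarrow> (complex ^ 'd \<Rightarrow> complex) \<Rightarrow> (int ^ 'd) set" where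
  "Vmon' d f = {vpt d f a | a. \<bar>val d f a\<bar> \<noteq> \<infinity>}"

definition compatible :: "('i \<Rightarrow> int ^ 'd) \<Rightarrow> int ^ 'd \<Rightarrow> ('i \<Rightarrow> nat) \<Rightarrow> bool" where
  "compatible h d \<beta> \<longleftrightarrow> (\<forall>i. \<beta> i = 0 \<or> hv (h i) d = 0)"

definition W :: "(real ^ 'd) set \<Rightarrow> ('i \<Rightarrow> int ^ 'd) \<Rightarrow> ('i \<Rightarrow> nat) \<Rightarrow> (int ^ 'd) set" where
  "W \<sigma> h \<beta> = {a \<in> semigrp \<sigma>. \<forall>i. int (\<beta> i) \<le> hv (h i) a}"

definition WB :: "(real ^ 'd) set \<Rightarrow> ('i \<Rightarrow> int ^ 'd) \<Rightarrow> ('i \<Rightarrow> nat) set \<Rightarrow> (int ^ 'd) set" where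
  "WB \<sigma> h B = (\<Union>\<beta>\<in>B. W \<sigma> h \<beta>)"

end

theory Submission
  imports Defs
begin


lemma rvec_add: "rvec (a + b) = rvec a + rvec b"
  by (simp add: rvec_def vec_eq_iff)
lemma rvec_diff: "rvec (a - b) = rvec a - rvec b"
  by (simp add: rvec_def vec_eq_iff)
lemma rvec_uminus: "rvec (- a) = - rvec a"
  by (simp add: rvec_def vec_eq_iff)
lemma rvec_zero[simp]: "rvec 0 = 0"
  by (simp add: rvec_def vec_eq_iff)
lemma rvec_smult: "rvec (c *s a) = real_of_int c *\<^sub>R rvec a"
  by (simp add: rvec_def vec_eq_iff)
lemma rvec_inj: "rvec a = rvec b \<longleftrightarrow> a = b"
  by (simp add: rvec_def vec_eq_iff)
lemma inner_rvec: "rvec v \<bullet> rvec x = real_of_int (hv v x)"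
  by (simp add: rvec_def hv_def inner_vec_def)

lemma hv_add: "hv v (a + b) = hv v a + hv v b"
  by (simp add: hv_def sum.distrib algebra_simps)
lemma hv_diff: "hv v (a - b) = hv v a - hv v b"
  by (simp add: hv_def sum_subtractf algebra_simps)
lemma hv_uminus: "hv v (- a) = - hv v a"
  by (simp add: hv_def sum_negf)
lemma hv_smult: "hv v (c *s a) = c * hv v a"
  by (simp add: hv_def sum_distrib_left algebra_simps)



locale gcone =
  fixes \<sigma> :: "(real ^ 'd) set" and G :: "(int ^ 'd) set"
  assumes finG: "finite G"
    and sig: "\<sigma> = {(\<Sum>g\<in>G. c g *\<^sub>R rvec g) | c. \<forall>g\<in>G. 0 \<le> c g}"
begin

lemma sig_mem: "(\<forall>g\<in>G. 0 \<le> c g) \<Longrightarrow> (\<Sum>g\<in>G. c g *\<^sub>R rvec g) \<in> \<sigma>"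
  unfolding sig by blast

lemma gen_in: "g \<in> G \<Longrightarrow> rvec g \<in> \<sigma>"
proof -
  assume g: "g \<in> G"
  have "(\<Sum>x\<in>G. (if x = g then 1 else 0) *\<^sub>R rvec x) = (\<Sum>x\<in>G. if x = g then rvec x else 0)"
    by (rule sum.cong) auto
  also have "\<dots> = rvec g" using g finG by simp
  finally have "(\<Sum>x\<in>G. (if x = g then 1 else 0) *\<^sub>R rvec x) = rvec g" .
  then show ?thesis using sig_mem[of "\<lambda>x. if x = g then 1 else 0"] by simp
qed

lemma sig_add: "x \<in> \<sigma> \<Longrightarrow> y \<in> \<sigma> \<Longrightarrow> x + y \<in> \<sigma>"
proof -
  assume "x \<in> \<sigma>" "y \<in> \<sigma>"
  then obtain c c' where "x = (\<Sum>g\<in>G. c g *\<^sub>R rvec g)" "\<forall>g\<in>G. 0 \<le> c g"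
    "y = (\<Sum>g\<in>G. c' g *\<^sub>R rvec g)" "\<forall>g\<in>G. 0 \<le> c' g" unfolding sig by auto
  then have "x + y = (\<Sum>g\<in>G. (c g + c' g) *\<^sub>R rvec g)" "\<forall>g\<in>G. 0 \<le> c g + c' g"
    by (auto simp: sum.distrib scaleR_add_left)
  then show ?thesis using sig_mem[of "\<lambda>g. c g + c' g"] by simp
qed

lemma sig_zero: "0 \<in> \<sigma>"
proof -
  have "\<exists>c. (0::real^'d) = (\<Sum>g\<in>G. c g *\<^sub>R rvec g) \<and> (\<forall>g\<in>G. 0 \<le> c g)"
    by (rule exI[of _ "\<lambda>_. 0"]) simp
  then show ?thesis using sig_mem[of "\<lambda>_. 0"] by simp
qed

lemma sig_scale: "x \<in> \<sigma> \<Longrightarrow> 0 \<le> a \<Longrightarrow> a *\<^sub>R x \<in> \<sigma>"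
proof -
  assume "x \<in> \<sigma>" "0 \<le> a"
  then obtain c where "x = (\<Sum>g\<in>G. c g *\<^sub>R rvec g)" "\<forall>g\<in>G. 0 \<le> c g"
     unfolding sig by auto
  then have "a *\<^sub>R x = (\<Sum>g\<in>G. (a * c g) *\<^sub>R rvec g)" "\<forall>g\<in>G. 0 \<le> a * c g"
    using \<open>0 \<le> a\<close> by (auto simp: scaleR_sum_right)
  then show ?thesis using sig_mem[of "\<lambda>g. a * c g"] by simp
qed

lemma sig_sum: "finite A \<Longrightarrow> (\<forall>y\<in>A. u y \<ge> 0 \<and> y \<in> \<sigma>) \<Longrightarrow> (\<Sum>y\<in>A. u y *\<^sub>R y) \<in> \<sigma>"
  by (induction A rule: finite_induct) (auto intro: sig_add sig_scale sig_zero)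

lemma dual_eq: "dual_cone \<sigma> = {u. \<forall>g\<in>G. 0 \<le> rvec g \<bullet> u}"
proof
  show "dual_cone \<sigma> \<subseteq> {u. \<forall>g\<in>G. 0 \<le> rvec g \<bullet> u}"
    using gen_in by (auto simp: dual_cone_def inner_commute)
next
  show "{u. \<forall>g\<in>G. 0 \<le> rvec g \<bullet> u} \<subseteq> dual_cone \<sigma>"
  proof
    fix u assume u: "u \<in> {u. \<forall>g\<in>G. 0 \<le> rvec g \<bullet> u}"
    show "u \<in> dual_cone \<sigma>" unfolding dual_cone_def
    proof (intro CollectI ballI)
      fix v assume "v \<in> \<sigma>"
      then obtain c where v: "v = (\<Sum>g\<in>G. c g *\<^sub>R rvec g)" "\<forall>g\<in>G. 0 \<le> c g"
        unfolding sig by auto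
      have "u \<bullet> v = (\<Sum>g\<in>G. c g * (rvec g \<bullet> u))"
        by (simp add: v inner_sum_right inner_commute)
      moreover have "0 \<le> (\<Sum>g\<in>G. c g * (rvec g \<bullet> u))" using u v by (auto intro!: sum_nonneg)
      ultimately show "0 \<le> u \<bullet> v" by simp
    qed
  qed
qed

lemma interior_dual:
  assumes sc: "strongly_convex \<sigma>"
  shows "interior (dual_cone \<sigma>) \<noteq> {}"
proof -
  define Y where "Y = rvec ` {g\<in>G. rvec g \<noteq> 0}"
  have finY: "finite Y" using finG by (simp add: Y_def)
  have Ysig: "Y \<subseteq> \<sigma>" using gen_in by (auto simp: Y_def)
  have Ynz: "0 \<notin> Y" by (auto simp: Y_def)
  have "0 \<notin> convex hull Y"
  proof
    assume "0 \<in> convex hull Y"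
    then obtain u where u: "\<forall>y\<in>Y. 0 \<le> u y" "sum u Y = 1" "(\<Sum>y\<in>Y. u y *\<^sub>R y) = 0"
      using finY by (auto simp: convex_hull_finite)
    then obtain y0 where y0: "y0 \<in> Y" "u y0 \<noteq> 0"
      by (metis sum.neutral zero_neq_one)
    then have up: "u y0 > 0" using u by force
    define w where "w = u y0 *\<^sub>R y0"
    have w: "w \<in> \<sigma>" using Ysig y0 up by (auto simp: w_def intro!: sig_scale)
    have "(\<Sum>y\<in>Y. u y *\<^sub>R y) = w + (\<Sum>y\<in>Y-{y0}. u y *\<^sub>R y)"
      using finY y0 by (simp add: w_def sum.remove)
    then have "- w = (\<Sum>y\<in>Y-{y0}. u y *\<^sub>R y)" using u by (metis neg_eq_iff_add_eq_0)
    also have "\<dots> \<in> \<sigma>" using finY u Ysig by (intro sig_sum) auto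
    finally have "w \<in> uminus ` \<sigma>" by (metis image_eqI minus_minus)
    with w sc have "w = 0" by (auto simp: strongly_convex_def)
    then show False using up y0 Ynz by (auto simp: w_def)
  qed
  moreover have "convex (convex hull Y)" by simp
  moreover have "closed (convex hull Y)"
    using finY by (simp add: compact_imp_closed finite_imp_compact_convex_hull)
  ultimately obtain a b where ab: "0 < b" "\<forall>x\<in>convex hull Y. inner a x > b"
    using separating_hyperplane_closed_0 by blast
  define U where "U = (\<Inter>y\<in>Y. {x. inner y x > 0})"
  have "open U" unfolding U_def using finY
    by (intro open_INT) (auto simp: open_halfspace_gt)
  moreover have "a \<in> U" unfolding U_def
  proof (rule INT_I)
    fix y assume "y \<in> Y"
    then have "inner a y > b" using ab(2) hull_inc[of y Y] by blast
    then show "a \<in> {x. inner y x > 0}" using ab(1) by (simp add: inner_commute)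
  qed
  moreover have "U \<subseteq> dual_cone \<sigma>"
  proof
    fix x assume x: "x \<in> U"
    have "0 \<le> rvec g \<bullet> x" if "g \<in> G" for g
    proof (cases "rvec g = 0")
      case False then have "rvec g \<in> Y" using that by (auto simp: Y_def)
      then show ?thesis using x unfolding U_def by (auto simp: less_imp_le)
    qed simp
    then show "x \<in> dual_cone \<sigma>" by (simp add: dual_eq)
  qed
  ultimately show ?thesis using interior_maximal by blast
qed

end


lemma primitive_decomp:
  fixes g :: "int ^ 'd"
  assumes "g \<noteq> 0"
  shows "\<exists>k v. k > 0 \<and> g = k *s v \<and> primitive_vec v"
proof -
  define k where "k = Gcd (range (\<lambda>i. g $ i))"
  have kd: "k dvd g $ i" for i unfolding k_def by (rule Gcd_dvd) simp
  have "k \<noteq> 0" using assms unfolding k_def by (auto simp: vec_eq_iff)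
  moreover have "k \<ge> 0" unfolding k_def
    by (metis abs_ge_zero normalize_Gcd normalize_int_def)
  ultimately have kp: "k > 0" by simp
  define v where "v = (\<chi> i. g $ i div k)"
  have gv: "g = k *s v" using kd by (simp add: v_def vec_eq_iff)
  have "primitive_vec v" unfolding primitive_vec_def
  proof (intro allI impI)
    fix m :: int assume m: "\<forall>i. m dvd v $ i"
    have "m * k dvd g $ i" for i using m[rule_format, of i] gv
      by (metis mult_dvd_mono dvd_refl mult.commute vector_smult_component)
    then have "m * k dvd k" unfolding k_def by (intro Gcd_greatest) auto
    then have "m * k dvd 1 * k" by simp
    then have "m dvd 1" using kp by (subst (asm) dvd_mult_cancel_right) auto
    then show "is_unit m" by simp
  qed
  then show ?thesis using kp gv by blast
qed

context gcone
begin

lemma easy_dir: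
  assumes bij: "bij_betw h UNIV (facet_support_functions (dual_cone \<sigma>))"
    and u: "u \<in> dual_cone \<sigma>"
  shows "0 \<le> rvec (h i) \<bullet> u"
proof -
  have "h i \<in> facet_support_functions (dual_cone \<sigma>)"
    using bij by (auto simp: bij_betw_def)
  then show ?thesis using u by (auto simp: facet_support_functions_def)
qed

lemma hard_dir:
  assumes sc: "strongly_convex \<sigma>"
    and bij: "bij_betw hf UNIV (facet_support_functions (dual_cone \<sigma>))"
    and u: "\<forall>i. 0 \<le> rvec (hf i) \<bullet> u"
  shows "u \<in> dual_cone \<sigma>"
proof -
  define C where "C = dual_cone \<sigma>"
  define hs where "hs = (\<lambda>g::int^'d. {x::real^'d. (- rvec g) \<bullet> x \<le> 0})"
  define Hs where "Hs = hs ` G"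
  have CHs: "C = \<Inter>Hs" unfolding C_def Hs_def hs_def dual_eq by auto
  have finHs: "finite Hs" using finG by (simp add: Hs_def)
  define P where "P = (\<lambda>F. F \<subseteq> Hs \<and> C = \<Inter>F)"
  have "P Hs" using CHs by (simp add: P_def)
  then obtain F where PF: "P F" and Fmin: "\<forall>F'. P F' \<longrightarrow> card F \<le> card F'"
    using ex_has_least_nat[of P Hs card] by blast
  have FHs: "F \<subseteq> Hs" and CF: "C = \<Inter>F" using PF by (auto simp: P_def)
  have finF: "finite F" using FHs finHs finite_subset by blast
  have min: "C \<noteq> \<Inter>F'" if "F' \<subset> F" for F'
  proof
    assume "C = \<Inter>F'"
    then have "P F'" using that FHs by (auto simp: P_def)
    then have "card F \<le> card F'" using Fmin by blast
    moreover have "card F' < card F" using psubset_card_mono[OF finF that] .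
    ultimately show False by simp
  qed
  have hne: "h \<noteq> UNIV" if "h \<in> F" for h
  proof
    assume "h = UNIV"
    then have "\<Inter>(F - {h}) = \<Inter>F" by auto
    moreover have "F - {h} \<subset> F" using that by auto
    ultimately show False using min CF by metis
  qed
  have "\<exists>g. g \<in> G \<and> rvec g \<noteq> 0 \<and> h = hs g" if hF: "h \<in> F" for h
  proof -
    obtain g where "g \<in> G" "h = hs g" using hF FHs unfolding Hs_def by blast
    moreover have "rvec g \<noteq> 0" using hne[OF hF] \<open>h = hs g\<close> by (auto simp: hs_def)
    ultimately show ?thesis by blast
  qed
  then obtain gg where gg: "\<And>h. h \<in> F \<Longrightarrow> gg h \<in> G \<and> rvec (gg h) \<noteq> 0 \<and> h = hs (gg h)"
    by metis
  have intC: "interior C \<noteq> {}" using interior_dual[OF sc] by (simp add: C_def)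
  have affC: "affine hull C = UNIV" using affine_hull_nonempty_interior[OF intC] .
  have adC: "aff_dim C = int CARD('d)" using aff_dim_nonempty_interior[OF intC] by simp
  have seqC: "C = affine hull C \<inter> \<Inter>F" using CF affC by simp
  have faceq: "\<And>h. h \<in> F \<Longrightarrow> - rvec (gg h) \<noteq> 0 \<and> h = {x. - rvec (gg h) \<bullet> x \<le> 0}"
    using gg by (auto simp: hs_def)
  have psub: "C \<subset> affine hull C \<inter> \<Inter>F'" if "F' \<subset> F" for F'
  proof -
    have "C \<subseteq> \<Inter>F'" using CF that by blast
    moreover have "C \<noteq> \<Inter>F'" using min that by blast
    ultimately show ?thesis using affC by auto
  qed
  have expl: "X facet_of C \<longleftrightarrow> (\<exists>h'. h' \<in> F \<and> X = C \<inter> {x. - rvec (gg h') \<bullet> x = 0})" for X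
    by (rule facet_of_polyhedron_explicit[OF finF seqC faceq psub])
  have facet: "C \<inter> {x. (- rvec (gg h)) \<bullet> x = 0} facet_of C" if "h \<in> F" for h
    using expl that by blast
  have "u \<in> h" if hF: "h \<in> F" for h
  proof -
    define g where "g = gg h"
    have gG: "rvec g \<noteq> 0" "h = hs g" using gg[OF hF] by (auto simp: g_def)
    then have "g \<noteq> 0" by auto
    then obtain k v where kv: "k > 0" "g = k *s v" "primitive_vec v"
      using primitive_decomp by blast
    have rg: "rvec g = real_of_int k *\<^sub>R rvec v" using kv by (simp add: rvec_smult)
    have "v \<in> facet_support_functions C" unfolding facet_support_functions_def
    proof (intro CollectI conjI exI)
      show "primitive_vec v" by fact
      let ?Fc = "C \<inter> {x. (- rvec g) \<bullet> x = 0}"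
      show "?Fc face_of C" using facet[OF hF] facet_of_imp_face_of by (simp add: g_def)
      show "aff_dim ?Fc = int CARD('d) - 1" using facet[OF hF] adC by (simp add: facet_of_def g_def)
      show "\<forall>x\<in>C. 0 \<le> rvec v \<bullet> x"
      proof
        fix x assume "x \<in> C"
        then have "x \<in> h" using CF hF by blast
        then have "0 \<le> real_of_int k * (rvec v \<bullet> x)" using gG rg by (simp add: hs_def)
        then show "0 \<le> rvec v \<bullet> x" using kv by (simp add: zero_le_mult_iff)
      qed
      show "\<forall>x\<in>?Fc. rvec v \<bullet> x = 0" using rg kv by auto
    qed
    then obtain i where "v = hf i" using bij unfolding C_def bij_betw_def by auto
    then have "0 \<le> rvec v \<bullet> u" using u by simp
    then have "0 \<le> rvec g \<bullet> u" using rg kv by simp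
    then show "u \<in> h" using gG by (simp add: hs_def)
  qed
  then have "u \<in> \<Inter>F" by blast
  then show ?thesis using CF C_def by simp
qed

end


locale mt =
  fixes \<sigma> :: "(real ^ 'd) set" and h :: "'i::finite \<Rightarrow> int ^ 'd"
    and d e :: "int ^ 'd" and q :: nat
    and f :: "complex ^ 'd \<Rightarrow> complex" and I :: "'d laurent set"
  assumes toric: "toric_setup \<sigma> h"
    and d_nz: "d \<noteq> 0"
    and negd: "- d \<in> semigrp \<sigma>"
    and q_pos: "1 \<le> q"
    and e_prim: "primitive_vec e"
    and d_eq: "d = of_nat q *s e"
    and I_mon: "monomial_ideal \<sigma> I"
    and I_nz: "I \<noteq> {0}"
    and fixed: "delta d f ` I = I"
begin

abbreviation "S \<equiv> semigrp \<sigma>"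

lemma S_iff: "a \<in> S \<longleftrightarrow> (\<forall>i. 0 \<le> hv (h i) a)"
proof -
  obtain G :: "(int^'d) set" where G: "finite G" "\<sigma> = {(\<Sum>g\<in>G. c g *\<^sub>R rvec g) | c. \<forall>g\<in>G. 0 \<le> c g}"
    using toric by (auto simp: toric_setup_def rat_poly_cone_def)
  interpret gcone \<sigma> G using G by unfold_locales
  have sc: "strongly_convex \<sigma>" and bij: "bij_betw h UNIV (facet_support_functions (dual_cone \<sigma>))"
    using toric by (auto simp: toric_setup_def)
  show ?thesis
  proof
    assume "a \<in> S"
    show "\<forall>i. 0 \<le> hv (h i) a"
    proof
      fix i
      have "0 \<le> rvec (h i) \<bullet> rvec a"
        by (rule easy_dir[OF bij]) (use \<open>a \<in> S\<close> in \<open>simp add: semigrp_def\<close>)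
      then show "0 \<le> hv (h i) a" by (simp add: inner_rvec)
    qed
  next
    assume "\<forall>i. 0 \<le> hv (h i) a"
    then show "a \<in> S" using hard_dir[OF sc bij, of "rvec a"] by (auto simp: semigrp_def inner_rvec)
  qed
qed

lemma S_add: "a \<in> S \<Longrightarrow> b \<in> S \<Longrightarrow> a + b \<in> S"
  by (auto simp: S_iff hv_add)

lemma S_zero: "0 \<in> S"
  by (auto simp: S_iff hv_def)

lemma S_pointed: "a \<in> S \<Longrightarrow> - a \<in> S \<Longrightarrow> a = 0"
proof -
  assume a: "a \<in> S" "- a \<in> S"
  define u where "u = rvec a"
  have orth: "u \<bullet> v = 0" if "v \<in> \<sigma>" for v
  proof -
    have "0 \<le> u \<bullet> v" using a(1) that by (auto simp: semigrp_def dual_cone_def u_def)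
    moreover have "0 \<le> (- u) \<bullet> v" using a(2) that by (auto simp: semigrp_def dual_cone_def u_def rvec_uminus)
    ultimately show ?thesis by simp
  qed
  have "interior \<sigma> \<noteq> {}" using toric by (auto simp: toric_setup_def full_dim_def)
  then obtain x where "x \<in> interior \<sigma>" by auto
  then obtain \<epsilon> where \<epsilon>: "\<epsilon> > 0" "ball x \<epsilon> \<subseteq> \<sigma>" using mem_interior by blast
  define t where "t = \<epsilon> / (2 * (norm u + 1))"
  have "0 < 2 * (norm u + 1)" by (smt (verit) norm_ge_zero)
  then have tp: "t > 0" using \<epsilon> unfolding t_def by simp
  have "norm (t *\<^sub>R u) = t * norm u" using tp by simp
  also have "\<dots> < \<epsilon>"
  proof -
    have "t * norm u \<le> t * (norm u + 1)" using tp by simp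
    also have "\<dots> = \<epsilon> / 2"
    proof -
      have "0 < norm u + 1" by (smt (verit) norm_ge_zero)
      then show ?thesis unfolding t_def by (simp add: field_simps)
    qed
    finally show ?thesis using \<epsilon> by simp
  qed
  finally have "x + t *\<^sub>R u \<in> ball x \<epsilon>" by (simp add: dist_norm)
  then have "x + t *\<^sub>R u \<in> \<sigma>" using \<epsilon> by blast
  then have "u \<bullet> (x + t *\<^sub>R u) = 0" by (rule orth)
  moreover have "u \<bullet> x = 0" using \<open>x \<in> interior \<sigma>\<close> interior_subset orth by blast
  ultimately have "t * (u \<bullet> u) = 0" by (simp add: inner_add_right)
  then have "u = 0" using tp by simp
  then show "a = 0" by (metis rvec_inj rvec_zero u_def)
qed

lemma hv_d: "hv v d = int q * hv v e"
  by (simp add: d_eq hv_smult)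

lemma e_nz: "e \<noteq> 0" using d_nz d_eq by auto

lemma neg_e: "- e \<in> S"
proof -
  have "0 \<le> hv (h i) (- d)" for i using negd S_iff by blast
  then have "0 \<le> int q * hv (h i) (- e)" for i by (simp add: hv_uminus hv_d)
  then have "0 \<le> hv (h i) (- e)" for i using q_pos by (simp add: zero_le_mult_iff)
  then show ?thesis by (simp add: S_iff)
qed

lemma e_notS: "e \<notin> S" using S_pointed neg_e e_nz by blast

lemma exists_neg: "\<exists>i0. hv (h i0) e < 0"
  using e_notS S_iff by (meson not_le)

lemma hv_e_zero_iff: "hv (h i) e = 0 \<longleftrightarrow> hv (h i) d = 0"
  using q_pos by (simp add: hv_d)

lemma hv_negE_pos: "hv (h i) d \<noteq> 0 \<Longrightarrow> 1 \<le> hv (h i) (- e)"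
proof -
  assume "hv (h i) d \<noteq> 0"
  then have "hv (h i) (- e) \<noteq> 0" using hv_e_zero_iff by (simp add: hv_uminus)
  moreover have "0 \<le> hv (h i) (- e)" using neg_e S_iff by blast
  ultimately show ?thesis by simp
qed

lemma S_smult_negE: "0 \<le> k \<Longrightarrow> k *s (- e) \<in> S"
proof -
  assume k: "0 \<le> k"
  have "0 \<le> hv (h i) (k *s (- e))" for i
    using neg_e S_iff k unfolding hv_smult by simp
  then show ?thesis using S_iff by blast
qed

lemma line_leaves: "\<exists>N. \<forall>j\<ge>N. c + j *s e \<notin> S"
proof -
  obtain i0 where i0: "hv (h i0) e < 0" using exists_neg by blast
  have "c + j *s e \<notin> S" if "j \<ge> \<bar>hv (h i0) c\<bar> + 1" for j
  proof
    assume "c + j *s e \<in> S"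
    then have "0 \<le> hv (h i0) c + j * hv (h i0) e" using S_iff by (simp add: hv_add hv_smult)
    moreover have "j * hv (h i0) e \<le> j * (- 1)"
      by (rule mult_left_mono) (use i0 that in auto)
    ultimately show False using that by simp
  qed
  then show ?thesis by blast
qed

end


lemma sum_in_ideal:
  assumes "is_ideal \<sigma> J" "finite A" "\<forall>a\<in>A. g a \<in> J"
  shows "sum g A \<in> J"
  using assms(2,3)
proof (induction A rule: finite_induct)
  case empty then show ?case using assms(1) by (simp add: is_ideal_def)
next
  case (insert x F) then show ?case using assms(1) by (simp add: is_ideal_def)
qed

lemma keys_xmon[simp]: "Poly_Mapping.keys (xmon a) = {a}"
  by (simp add: xmon_def)

lemma xmon_mult: "xmon a * xmon b = xmon (a + b)"
  by (simp add: xmon_def mult_single)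

lemma pm_expand: "p = (\<Sum>a\<in>Poly_Mapping.keys p. Poly_Mapping.single a (Poly_Mapping.lookup p a))"
proof (rule poly_mapping_eqI)
  fix x
  have "Poly_Mapping.lookup (\<Sum>a\<in>Poly_Mapping.keys p. Poly_Mapping.single a (Poly_Mapping.lookup p a)) x
      = (\<Sum>a\<in>Poly_Mapping.keys p. if a = x then Poly_Mapping.lookup p a else 0)"
    by (simp add: lookup_sum lookup_single when_def)
  also have "\<dots> = Poly_Mapping.lookup p x"
    by (simp add: in_keys_iff)
  finally show "Poly_Mapping.lookup p x = Poly_Mapping.lookup (\<Sum>a\<in>Poly_Mapping.keys p. Poly_Mapping.single a (Poly_Mapping.lookup p a)) x"
    by simp
qed

lemma lookup_delta:
  "Poly_Mapping.lookup (delta d f p) x =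
     (\<Sum>b\<in>Poly_Mapping.keys p. if b + d = x then Poly_Mapping.lookup p b * f (cvec b) else 0)"
  by (simp add: delta_def lookup_sum lookup_single when_def)

lemma delta_xmon: "delta d f (xmon a) = Poly_Mapping.single (a + d) (f (cvec a))"
  by (simp add: delta_def xmon_def)

context mt
begin

definition "E = Exp \<sigma> I"

lemma I_ideal: "is_ideal \<sigma> I" using I_mon by (simp add: monomial_ideal_def)

lemma single_Rring: "s \<in> S \<Longrightarrow> Poly_Mapping.single s c \<in> Rring \<sigma>"
  by (simp add: Rring_def)

lemma E_iff: "a \<in> E \<longleftrightarrow> xmon a \<in> I"
proof
  assume "xmon a \<in> I"
  then have "xmon a \<in> Rring \<sigma>" using I_ideal by (auto simp: is_ideal_def)
  then have "a \<in> S" by (simp add: Rring_def)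
  then show "a \<in> E" using \<open>xmon a \<in> I\<close> by (simp add: E_def Exp_def)
qed (simp add: E_def Exp_def)

lemma E_S: "a \<in> E \<Longrightarrow> a \<in> S" by (simp add: E_def Exp_def)

lemma E_up: "a \<in> E \<Longrightarrow> s \<in> S \<Longrightarrow> a + s \<in> E"
proof -
  assume a: "a \<in> E" and s: "s \<in> S"
  have "xmon s \<in> Rring \<sigma>" using s by (simp add: xmon_def single_Rring)
  then have "xmon s * xmon a \<in> I" using I_ideal a E_iff by (auto simp: is_ideal_def)
  then show ?thesis by (simp add: xmon_mult E_iff add.commute)
qed

lemma keys_I: "p \<in> I \<Longrightarrow> Poly_Mapping.keys p \<subseteq> E"
proof -
  assume p: "p \<in> I"
  define J0 where "J0 = {p. p \<in> Rring \<sigma> \<and> Poly_Mapping.keys p \<subseteq> E}"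
  have "is_ideal \<sigma> J0"
    unfolding is_ideal_def
  proof (intro conjI ballI)
    show "J0 \<subseteq> Rring \<sigma>" by (auto simp: J0_def)
    show "0 \<in> J0" by (simp add: J0_def Rring_def)
    fix x y assume x: "x \<in> J0" and y: "y \<in> J0"
    then show "x + y \<in> J0" using keys_add[of x y] by (auto simp: J0_def Rring_def)
  next
    fix r x assume r: "r \<in> Rring \<sigma>" and x: "x \<in> J0"
    have "Poly_Mapping.keys (r * x) \<subseteq> E"
    proof
      fix c assume "c \<in> Poly_Mapping.keys (r * x)"
      then obtain a b where "c = a + b" "a \<in> Poly_Mapping.keys r" "b \<in> Poly_Mapping.keys x"
        using keys_mult by blast
      moreover have "a \<in> S" using r \<open>a \<in> Poly_Mapping.keys r\<close> by (auto simp: Rring_def)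
      moreover have "b \<in> E" using x \<open>b \<in> Poly_Mapping.keys x\<close> by (auto simp: J0_def)
      ultimately show "c \<in> E" using E_up by (metis add.commute)
    qed
    then show "r * x \<in> J0" using E_S by (auto simp: J0_def Rring_def)
  qed
  moreover have "{xmon a | a. xmon a \<in> I} \<subseteq> J0"
    using E_iff E_S by (auto simp: J0_def Rring_def)
  ultimately have "ideal_gen \<sigma> {xmon a | a. xmon a \<in> I} \<subseteq> J0"
    unfolding ideal_gen_def by blast
  then have "I \<subseteq> J0" using I_mon by (simp add: monomial_ideal_def)
  then show ?thesis using p by (auto simp: J0_def)
qed

lemma in_ideal_by_gens:
  assumes J: "is_ideal \<sigma> J" and kp: "Poly_Mapping.keys p \<subseteq> E"
    and gens: "\<And>a. a \<in> E \<Longrightarrow> \<exists>s m. s \<in> S \<and> a = s + m \<and> xmon m \<in> J"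
  shows "p \<in> J"
proof -
  have one: "Poly_Mapping.single a (Poly_Mapping.lookup p a) \<in> J" if ak: "a \<in> Poly_Mapping.keys p" for a
  proof -
    have "a \<in> E" using ak kp by (rule subsetD[rotated])
    from gens[OF this] obtain s m where sm: "s \<in> S" "a = s + m" "xmon m \<in> J" by blast
    have r: "Poly_Mapping.single s (Poly_Mapping.lookup p a) \<in> Rring \<sigma>" using sm(1) by (rule single_Rring)
    have Jm: "\<forall>r\<in>Rring \<sigma>. \<forall>p\<in>J. r * p \<in> J" using J by (simp add: is_ideal_def)
    have "Poly_Mapping.single s (Poly_Mapping.lookup p a) * xmon m \<in> J"
      using Jm r sm(3) by blast
    moreover have "Poly_Mapping.single s (Poly_Mapping.lookup p a) * xmon m = Poly_Mapping.single a (Poly_Mapping.lookup p a)"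
      unfolding xmon_def mult_single sm(2) by simp
    ultimately show ?thesis by simp
  qed
  have "\<forall>a\<in>Poly_Mapping.keys p. Poly_Mapping.single a (Poly_Mapping.lookup p a) \<in> J"
    using one by blast
  then have "(\<Sum>a\<in>Poly_Mapping.keys p. Poly_Mapping.single a (Poly_Mapping.lookup p a)) \<in> J"
    by (rule sum_in_ideal[OF J finite_keys])
  then show ?thesis by (rule ssubst[OF pm_expand[of p]])
qed

lemma E1: "a \<in> E \<Longrightarrow> f (cvec a) \<noteq> 0 \<Longrightarrow> a + d \<in> E"
proof -
  assume a: "a \<in> E" "f (cvec a) \<noteq> 0"
  have "delta d f (xmon a) \<in> I" using a E_iff fixed by blast
  then have "Poly_Mapping.keys (delta d f (xmon a)) \<subseteq> E" by (rule keys_I)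
  then show ?thesis using a by (simp add: delta_xmon)
qed

lemma E2: "a \<in> E \<Longrightarrow> a - d \<in> E \<and> f (cvec (a - d)) \<noteq> 0"
proof -
  assume a: "a \<in> E"
  then have "xmon a \<in> delta d f ` I" using E_iff fixed by simp
  then obtain p where p: "p \<in> I" "xmon a = delta d f p" by blast
  have "Poly_Mapping.lookup (delta d f p) a = Poly_Mapping.lookup (xmon a) a" using p(2) by simp
  also have "\<dots> = 1" by (simp add: xmon_def)
  finally have "(\<Sum>b\<in>Poly_Mapping.keys p. if b + d = a then Poly_Mapping.lookup p b * f (cvec b) else 0) = 1"
    by (simp only: lookup_delta)
  then have "(\<Sum>b\<in>Poly_Mapping.keys p. if b + d = a then Poly_Mapping.lookup p b * f (cvec b) else 0) \<noteq> 0"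
    by simp
  then obtain b where b: "b \<in> Poly_Mapping.keys p" "(if b + d = a then Poly_Mapping.lookup p b * f (cvec b) else 0) \<noteq> 0"
    by (rule sum.not_neutral_contains_not_neutral)
  have bd: "b + d = a" using b(2) by (cases "b + d = a") auto
  then have "f (cvec b) \<noteq> 0" using b(2) by simp
  moreover have "b = a - d" using bd by (simp add: eq_diff_eq)
  moreover have "b \<in> E" using b(1) keys_I[OF p(1)] by blast
  ultimately show ?thesis by simp
qed

lemma E_ne: "E \<noteq> {}"
proof -
  obtain p where "p \<in> I" "p \<noteq> 0" using I_nz I_ideal by (auto simp: is_ideal_def)
  then have "Poly_Mapping.keys p \<noteq> {}" by simp
  then show ?thesis using keys_I[OF \<open>p \<in> I\<close>] by blast
qed

end


lemma smult_add_int: "(j::int) *s v + k *s v = (j + k) *s v"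
  by (simp add: vec_eq_iff algebra_simps)

lemma real_div_le_iff: "0 < (q::real) \<Longrightarrow> a / q \<le> b / q \<longleftrightarrow> a \<le> b"
  by (simp add: divide_le_cancel)
lemma real_div_less_iff: "0 < (q::real) \<Longrightarrow> a / q < b / q \<longleftrightarrow> a < b"
  by (simp add: divide_less_cancel)

context mt
begin

lemma rvec_d: "rvec d = real q *\<^sub>R rvec e"
  by (simp add: d_eq rvec_smult)

lemma shift_d: "c + j *s e + d = c + (j + int q) *s e"
  by (simp add: d_eq vec_eq_iff algebra_simps)

lemma E_down: "c + j *s e \<in> E \<Longrightarrow> j' \<le> j \<Longrightarrow> c + j' *s e \<in> E"
proof -
  assume a: "c + j *s e \<in> E" "j' \<le> j"
  have "(c + j *s e) + (j - j') *s (- e) \<in> E"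
    by (rule E_up[OF a(1) S_smult_negE]) (use a(2) in simp)
  moreover have "(c + j *s e) + (j - j') *s (- e) = c + j' *s e"
    by (simp add: vec_eq_iff algebra_simps)
  ultimately show ?thesis by simp
qed

lemma line_top:
  assumes "\<exists>j. c + j *s e \<in> E"
  shows "\<exists>M. \<forall>j. c + j *s e \<in> E \<longleftrightarrow> j \<le> M"
proof -
  obtain j0 where j0: "c + j0 *s e \<in> E" using assms by blast
  obtain N where N: "\<forall>j\<ge>N. c + j *s e \<notin> S" using line_leaves by blast
  have lt: "j < N" if "c + j *s e \<in> E" for j using N that E_S by (meson not_le)
  define L where "L = {j \<in> {j0..N}. c + j *s e \<in> E}"
  have finL: "finite L" unfolding L_def by (rule finite_subset[of _ "{j0..N}"]) auto
  have j0L: "j0 \<in> L" using j0 lt[OF j0] by (simp add: L_def)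
  define M where "M = Max L"
  have hML: "M \<in> L" unfolding M_def by (rule Max_in[OF finL]) (use j0L in auto)
  show ?thesis
  proof (intro exI allI iffI)
    fix j assume j: "c + j *s e \<in> E"
    show "j \<le> M"
    proof (cases "j0 \<le> j")
      case True
      then have "j \<in> L" using j lt[OF j] by (simp add: L_def)
      then show ?thesis using finL by (simp add: M_def)
    next
      case False
      moreover have "j0 \<le> M" using finL j0L by (simp add: M_def)
      ultimately show ?thesis by simp
    qed
  next
    fix j assume "j \<le> M"
    moreover have "c + M *s e \<in> E" using hML by (simp add: L_def)
    ultimately show "c + j *s e \<in> E" using E_down by blast
  qed
qed

lemma top_nz:
  assumes M: "\<forall>j. c + j *s e \<in> E \<longleftrightarrow> j \<le> M" and j: "j \<le> M - int q"
  shows "f (cvec (c + j *s e)) \<noteq> 0"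
proof -
  have "j + int q \<le> M" using j by simp
  then have "c + (j + int q) *s e \<in> E" using M by blast
  then have "f (cvec (c + (j + int q) *s e - d)) \<noteq> 0" using E2 by blast
  moreover have "c + (j + int q) *s e - d = c + j *s e"
    by (simp add: d_eq vec_eq_iff algebra_simps)
  ultimately show ?thesis by simp
qed

lemma top_z:
  assumes M: "\<forall>j. c + j *s e \<in> E \<longleftrightarrow> j \<le> M" and j: "M - int q < j" "j \<le> M"
  shows "f (cvec (c + j *s e)) = 0"
proof (rule ccontr)
  assume "f (cvec (c + j *s e)) \<noteq> 0"
  moreover have "c + j *s e \<in> E" using M j by simp
  ultimately have "c + j *s e + d \<in> E" using E1 by blast
  then have "c + (j + int q) *s e \<in> E" by (simp only: shift_d)
  then have "j + int q \<le> M" using M by blast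
  then show False using j by simp
qed

lemma rational_pt:
  assumes "rvec z = rvec c + t *\<^sub>R rvec d"
  shows "\<exists>j::int. z = c + j *s e \<and> t = real_of_int j / real q"
proof -
  define w where "w = z - c"
  define s where "s = t * real q"
  have ws: "real_of_int (w $ k) = s * real_of_int (e $ k)" for k
  proof -
    have "rvec w = t *\<^sub>R rvec d" using assms by (simp add: w_def rvec_diff)
    then have "rvec w $ k = (t *\<^sub>R rvec d) $ k" by simp
    then show ?thesis by (simp add: rvec_def d_eq s_def)
  qed
  obtain k0 where k0: "e $ k0 \<noteq> 0" using e_nz by (auto simp: vec_eq_iff)
  define n where "n = w $ k0"
  define m0 where "m0 = e $ k0"
  define g where "g = gcd n m0"
  have g0: "g \<noteq> 0" using k0 by (simp add: m0_def g_def)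
  obtain n' m' where nm: "n = n' * g" "m0 = m' * g" "coprime n' m'"
    using gcd_coprime_exists[of n m0] g0 unfolding g_def by blast
  have "real_of_int n = s * real_of_int m0" using ws[of k0] by (simp add: n_def m0_def)
  then have "real_of_int n' * real_of_int g = (s * real_of_int m') * real_of_int g"
    using nm(1,2) by (simp add: mult.assoc)
  then have sm: "real_of_int n' = s * real_of_int m'" using g0 by (metis mult_right_cancel of_int_eq_0_iff)
  have "m' dvd e $ k" for k
  proof -
    have "real_of_int (w $ k * m') = real_of_int (n' * e $ k)"
      using ws[of k] sm by (simp add: algebra_simps)
    then have "w $ k * m' = n' * e $ k" by (rule of_int_eq_iff[THEN iffD1])
    then have "m' dvd n' * e $ k" by (metis dvd_triv_right)
    moreover have "coprime m' n'" using nm(3) by (simp add: coprime_commute)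
    ultimately show ?thesis using coprime_dvd_mult_right_iff by blast
  qed
  then have "is_unit m'" using e_prim by (simp add: primitive_vec_def)
  then have m1: "m' = 1 \<or> m' = -1" by auto
  define j where "j = n' * m'"
  have sj: "s = real_of_int j" using m1 sm by (auto simp: j_def)
  have "w $ k = j * e $ k" for k
  proof -
    have "real_of_int (w $ k) = real_of_int (j * e $ k)" using ws[of k] sj by simp
    then show ?thesis by (rule of_int_eq_iff[THEN iffD1])
  qed
  then have "w = j *s e" by (simp add: vec_eq_iff)
  moreover have "t = real_of_int j / real q"
  proof -
    have "real q \<noteq> 0" using q_pos by simp
    then show ?thesis using sj by (simp add: s_def eq_divide_eq)
  qed
  moreover have "w = j *s e \<Longrightarrow> z = c + j *s e" by (simp add: w_def algebra_simps)
  ultimately show ?thesis by blast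
qed

lemma line_zeros_eq:
  "line_zeros d f c = (\<lambda>j. real_of_int j / real q) ` {j. f (cvec (c + j *s e)) = 0}"
proof
  show "line_zeros d f c \<subseteq> (\<lambda>j. real_of_int j / real q) ` {j. f (cvec (c + j *s e)) = 0}"
  proof
    fix t assume "t \<in> line_zeros d f c"
    then obtain z where z: "z \<in> Vmon f" "rvec z = rvec c + t *\<^sub>R rvec d"
      by (auto simp: line_zeros_def)
    obtain j where "z = c + j *s e" "t = real_of_int j / real q" using rational_pt[OF z(2)] by blast
    then show "t \<in> (\<lambda>j. real_of_int j / real q) ` {j. f (cvec (c + j *s e)) = 0}"
      using z(1) by (auto simp: Vmon_def)
  qed
next
  show "(\<lambda>j. real_of_int j / real q) ` {j. f (cvec (c + j *s e)) = 0} \<subseteq> line_zeros d f c"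
  proof
    fix t assume "t \<in> (\<lambda>j. real_of_int j / real q) ` {j. f (cvec (c + j *s e)) = 0}"
    then obtain j where j: "t = real_of_int j / real q" "f (cvec (c + j *s e)) = 0" by blast
    have "rvec (c + j *s e) = rvec c + t *\<^sub>R rvec d"
      using j(1) q_pos by (simp add: rvec_add rvec_smult rvec_d)
    then show "t \<in> line_zeros d f c" using j(2) by (auto simp: line_zeros_def Vmon_def)
  qed
qed

lemma vpt_eq: "rvec z = rvec c + pval d f c *\<^sub>R rvec d \<Longrightarrow> vpt d f c = z"
  unfolding vpt_def by (rule the_equality) (simp, metis rvec_inj)

end


context mt
begin

lemma line_vals:
  assumes nz: "\<forall>j. j \<le> M - int q \<longrightarrow> f (cvec (c + j *s e)) \<noteq> 0"
    and z: "\<forall>j. M - int q < j \<and> j \<le> M \<longrightarrow> f (cvec (c + j *s e)) = 0"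
  shows "val d f c = ereal (real_of_int (M - int q + 1) / real q)"
    and "pval d f c = real_of_int M / real q"
    and "vpt d f c = c + M *s e"
proof -
  define Zs where "Zs = {j. f (cvec (c + j *s e)) = 0}"
  define T where "T = line_zeros d f c"
  have T: "T = (\<lambda>j. real_of_int j / real q) ` Zs" unfolding T_def Zs_def by (rule line_zeros_eq)
  have qp: "real q > 0" using q_pos by simp
  have Zge: "M - int q + 1 \<le> j" if jZ: "j \<in> Zs" for j
  proof (rule ccontr)
    assume "\<not> M - int q + 1 \<le> j"
    then have "j \<le> M - int q" by simp
    then show False using nz jZ by (simp add: Zs_def)
  qed
  define v0 where "v0 = real_of_int (M - int q + 1) / real q"
  have v01: "v0 + 1 = real_of_int (M + 1) / real q"
    using qp by (simp add: v0_def field_simps)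
  have Mz: "M - int q + 1 \<in> Zs"
  proof -
    have "M - int q < M - int q + 1 \<and> M - int q + 1 \<le> M" using q_pos by simp
    then show ?thesis using z unfolding Zs_def by blast
  qed
  have MZ: "M \<in> Zs" using z q_pos by (simp add: Zs_def)
  have valeq: "val d f c = ereal v0"
    unfolding val_def T_def[symmetric]
  proof (rule antisym)
    show "Inf (ereal ` T) \<le> ereal v0"
    proof (rule Inf_lower)
      have "v0 \<in> T" unfolding T v0_def using Mz by (rule imageI)
      then show "ereal v0 \<in> ereal ` T" by (rule imageI)
    qed
    show "ereal v0 \<le> Inf (ereal ` T)"
    proof (rule Inf_greatest)
      fix x assume "x \<in> ereal ` T"
      then obtain j where j: "j \<in> Zs" "x = ereal (real_of_int j / real q)" by (auto simp: T)
      have "real_of_int (M - int q + 1) \<le> real_of_int j" using Zge[OF j(1)] by linarith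
      then have "v0 \<le> real_of_int j / real q" unfolding v0_def using real_div_le_iff[OF qp] by blast
      then show "ereal v0 \<le> x" using j by simp
    qed
  qed
  then show "val d f c = ereal (real_of_int (M - int q + 1) / real q)" by (simp add: v0_def)
  define W where "W = {t \<in> T. v0 \<le> t \<and> t < v0 + 1}"
  have Wj: "\<exists>j. t = real_of_int j / real q \<and> j \<in> Zs \<and> M - int q + 1 \<le> j \<and> j \<le> M" if tW: "t \<in> W" for t
  proof -
    obtain j where j: "j \<in> Zs" "t = real_of_int j / real q" using tW by (auto simp: W_def T)
    have "real_of_int j / real q < real_of_int (M + 1) / real q" using tW j v01 by (simp add: W_def)
    then have "real_of_int j < real_of_int (M + 1)" using real_div_less_iff[OF qp] by blast
    then have "j \<le> M" by linarith
    then show ?thesis using j Zge by blast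
  qed
  have finW: "finite W"
  proof (rule finite_subset)
    show "W \<subseteq> (\<lambda>j. real_of_int j / real q) ` {M - int q + 1..M}" using Wj by fastforce
  qed simp
  have MW: "real_of_int M / real q \<in> W"
  proof -
    have "real_of_int (M - int q + 1) \<le> real_of_int M" using q_pos by simp
    then have "v0 \<le> real_of_int M / real q" unfolding v0_def using real_div_le_iff[OF qp] by blast
    moreover have "real_of_int M / real q < v0 + 1" unfolding v01 using real_div_less_iff[OF qp] by simp
    ultimately show ?thesis using MZ by (auto simp: W_def T)
  qed
  have "Max W = real_of_int M / real q"
  proof (rule Max_eqI[OF finW _ MW])
    fix y assume "y \<in> W"
    then obtain j where "y = real_of_int j / real q" "j \<le> M" using Wj by blast
    then show "y \<le> real_of_int M / real q" using real_div_le_iff[OF qp] by simp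
  qed
  moreover have "pval d f c = Max W" unfolding pval_def valeq W_def T_def by simp
  ultimately show pv: "pval d f c = real_of_int M / real q" by simp
  show "vpt d f c = c + M *s e"
  proof (rule vpt_eq)
    show "rvec (c + M *s e) = rvec c + pval d f c *\<^sub>R rvec d"
      using qp by (simp add: pv rvec_add rvec_smult rvec_d)
  qed
qed

lemma vpt_on_line:
  assumes "\<bar>val d f c\<bar> \<noteq> \<infinity>"
  shows "\<exists>j. vpt d f c = c + j *s e"
proof -
  obtain v where v: "val d f c = ereal v" using assms by (cases "val d f c") auto
  define T where "T = line_zeros d f c"
  have qp: "real q > 0" using q_pos by simp
  have "Inf (ereal ` T) < ereal (v + 1)" using v by (simp add: val_def T_def)
  then obtain t where t: "t \<in> T" "ereal t < ereal (v + 1)" by (auto simp: Inf_less_iff)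
  have "Inf (ereal ` T) \<le> ereal t" by (rule Inf_lower) (use t(1) in blast)
  then have "ereal v \<le> ereal t" using v by (simp add: val_def T_def)
  then have vt: "v \<le> t" by simp
  define W where "W = {t \<in> T. v \<le> t \<and> t < v + 1}"
  have tW: "t \<in> W" using t vt by (simp add: W_def)
  have finW: "finite W"
  proof (rule finite_subset)
    show "W \<subseteq> (\<lambda>j. real_of_int j / real q) ` {\<lfloor>v * real q\<rfloor> .. \<lceil>(v + 1) * real q\<rceil>}"
    proof
      fix s assume s: "s \<in> W"
      then obtain j where j: "s = real_of_int j / real q"
        unfolding W_def T_def line_zeros_eq by auto
      have "v * real q \<le> real_of_int j" using s j qp by (simp add: W_def pos_le_divide_eq)
      then have 1: "\<lfloor>v * real q\<rfloor> \<le> j" by linarith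
      have "real_of_int j < (v + 1) * real q" using s j qp by (simp add: W_def pos_divide_less_eq)
      then have 2: "j \<le> \<lceil>(v + 1) * real q\<rceil>" by linarith
      show "s \<in> (\<lambda>j. real_of_int j / real q) ` {\<lfloor>v * real q\<rfloor> .. \<lceil>(v + 1) * real q\<rceil>}"
        using 1 2 j by auto
    qed
  qed simp
  have "pval d f c = Max W" unfolding pval_def v W_def T_def by simp
  then have "pval d f c \<in> W" using finW tW by (metis Max_in empty_iff)
  then have "pval d f c \<in> line_zeros d f c" by (simp add: W_def T_def)
  then obtain z where z: "z \<in> Vmon f" "rvec z = rvec c + pval d f c *\<^sub>R rvec d"
    by (auto simp: line_zeros_def)
  obtain j where "z = c + j *s e" using rational_pt[OF z(2)] by blast
  moreover have "vpt d f c = z" using z(2) by (rule vpt_eq)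
  ultimately show ?thesis by blast
qed

end


context mt
begin

definition "Bset = {\<beta>. compatible h d \<beta> \<and> (\<exists>b\<in>E. \<forall>i. hv (h i) d = 0 \<longrightarrow> hv (h i) b \<le> int (\<beta> i))}"

lemma WB_iff: "a \<in> WB \<sigma> h Bset \<longleftrightarrow> a \<in> S \<and> (\<exists>b\<in>E. \<forall>i. hv (h i) d = 0 \<longrightarrow> hv (h i) b \<le> hv (h i) a)"
proof
  assume "a \<in> WB \<sigma> h Bset"
  then obtain \<beta> where \<beta>: "\<beta> \<in> Bset" "a \<in> W \<sigma> h \<beta>" by (auto simp: WB_def)
  then obtain b where b: "b \<in> E" "\<forall>i. hv (h i) d = 0 \<longrightarrow> hv (h i) b \<le> int (\<beta> i)"
    by (auto simp: Bset_def)
  have aS: "a \<in> S" and aB: "\<forall>i. int (\<beta> i) \<le> hv (h i) a" using \<beta>(2) by (auto simp: W_def)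
  have "\<forall>i. hv (h i) d = 0 \<longrightarrow> hv (h i) b \<le> hv (h i) a" using b(2) aB by (meson order_trans)
  then show "a \<in> S \<and> (\<exists>b\<in>E. \<forall>i. hv (h i) d = 0 \<longrightarrow> hv (h i) b \<le> hv (h i) a)"
    using b(1) aS by blast
next
  assume a: "a \<in> S \<and> (\<exists>b\<in>E. \<forall>i. hv (h i) d = 0 \<longrightarrow> hv (h i) b \<le> hv (h i) a)"
  then obtain b where b: "b \<in> E" "\<forall>i. hv (h i) d = 0 \<longrightarrow> hv (h i) b \<le> hv (h i) a" by blast
  define \<beta> where "\<beta> = (\<lambda>i. if hv (h i) d = 0 then nat (hv (h i) a) else 0)"
  have ha: "0 \<le> hv (h i) a" for i using a S_iff by blast
  have "\<beta> \<in> Bset" unfolding Bset_def compatible_def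
  proof (intro CollectI conjI allI bexI[OF _ b(1)] impI)
    fix i show "\<beta> i = 0 \<or> hv (h i) d = 0" by (simp add: \<beta>_def)
  next
    fix i assume "hv (h i) d = 0"
    then show "hv (h i) b \<le> int (\<beta> i)" using b(2) ha[of i] by (simp add: \<beta>_def)
  qed
  moreover have "a \<in> W \<sigma> h \<beta>" using a ha by (simp add: W_def \<beta>_def)
  ultimately show "a \<in> WB \<sigma> h Bset" by (auto simp: WB_def)
qed

lemma E_WB: "a \<in> E \<Longrightarrow> a \<in> WB \<sigma> h Bset"
  using E_S WB_iff by blast

lemma WB_line:
  assumes "a \<in> WB \<sigma> h Bset"
  shows "\<exists>j. a + j *s e \<in> E"
proof -
  obtain b where b: "b \<in> E" "\<forall>i. hv (h i) d = 0 \<longrightarrow> hv (h i) b \<le> hv (h i) a"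
    using assms WB_iff by blast
  define j0 where "j0 = (\<Sum>i\<in>UNIV. \<bar>hv (h i) (a - b)\<bar>)"
  have j0ge: "\<bar>hv (h i) (a - b)\<bar> \<le> j0" for i
    unfolding j0_def by (rule member_le_sum) auto
  have "a + (- j0) *s e - b \<in> S"
  proof -
    have "0 \<le> hv (h i) (a + (- j0) *s e - b)" for i
    proof -
      have eq: "hv (h i) (a + (- j0) *s e - b) = hv (h i) (a - b) + j0 * hv (h i) (- e)"
        by (simp add: hv_add hv_diff hv_smult hv_uminus algebra_simps)
      show ?thesis
      proof (cases "hv (h i) d = 0")
        case True
        then have "hv (h i) e = 0" using hv_e_zero_iff by blast
        then show ?thesis using eq b(2) True by (simp add: hv_uminus hv_diff)
      next
        case False
        then have "1 \<le> hv (h i) (- e)" by (rule hv_negE_pos)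
        moreover have "0 \<le> j0" using j0ge[of i] by linarith
        ultimately have "j0 \<le> j0 * hv (h i) (- e)"
          using mult_left_mono[of 1 "hv (h i) (- e)" j0] by simp
        then show ?thesis using eq j0ge[of i] by linarith
      qed
    qed
    then show ?thesis using S_iff by blast
  qed
  then have "b + (a + (- j0) *s e - b) \<in> E" by (rule E_up[OF b(1)])
  then show ?thesis by (intro exI[of _ "- j0"]) (simp add: algebra_simps)
qed

lemma line_struct:
  assumes "\<exists>j. c + j *s e \<in> E"
  shows "\<exists>M. (\<forall>j. c + j *s e \<in> E \<longleftrightarrow> j \<le> M) \<and>
    val d f c = ereal (real_of_int (M - int q + 1) / real q) \<and>
    pval d f c = real_of_int M / real q \<and> vpt d f c = c + M *s e"
proof -
  obtain M where M: "\<forall>j. c + j *s e \<in> E \<longleftrightarrow> j \<le> M" using line_top[OF assms] by blast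
  have nz: "\<forall>j. j \<le> M - int q \<longrightarrow> f (cvec (c + j *s e)) \<noteq> 0" using top_nz[OF M] by blast
  have z: "\<forall>j. M - int q < j \<and> j \<le> M \<longrightarrow> f (cvec (c + j *s e)) = 0" using top_z[OF M] by blast
  show ?thesis using M line_vals[OF nz z] by blast
qed

lemma Vtop:
  assumes "a \<in> Vmon' d f" "a \<in> WB \<sigma> h Bset"
  shows "a \<in> E \<and> a + e \<notin> E \<and> (\<forall>i<q. a - of_nat i *s e \<in> Vmon f)"
proof -
  obtain c where c: "a = vpt d f c" "\<bar>val d f c\<bar> \<noteq> \<infinity>" using assms(1) by (auto simp: Vmon'_def)
  obtain j where j: "a = c + j *s e" using vpt_on_line[OF c(2)] c(1) by blast
  obtain j' where j': "a + j' *s e \<in> E" using WB_line[OF assms(2)] by blast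
  have "c + (j + j') *s e \<in> E" using j' j by (simp add: algebra_simps smult_add_int[symmetric])
  then obtain M where M: "\<forall>j. c + j *s e \<in> E \<longleftrightarrow> j \<le> M" "vpt d f c = c + M *s e"
    using line_struct by blast
  have aM: "a = c + M *s e" using M(2) c(1) by simp
  have "a \<in> E" using M(1) aM by blast
  moreover have "a + e \<notin> E"
  proof
    assume "a + e \<in> E"
    moreover have "a + e = c + (M + 1) *s e" using aM by (simp add: vec_eq_iff algebra_simps)
    ultimately have "c + (M + 1) *s e \<in> E" by simp
    then have "M + 1 \<le> M" using M(1) by blast
    then show False by simp
  qed
  moreover have "a - of_nat i *s e \<in> Vmon f" if "i < q" for i
  proof -
    have "a - of_nat i *s e = c + (M - int i) *s e" using aM by (simp add: vec_eq_iff algebra_simps)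
    moreover have "f (cvec (c + (M - int i) *s e)) = 0"
      by (rule top_z[OF M(1)]) (use that in auto)
    ultimately show ?thesis unfolding Vmon_def by (metis (mono_tags) mem_Collect_eq)
  qed
  ultimately show ?thesis by blast
qed

theorem main: "\<exists>B :: ('i \<Rightarrow> nat) set. (\<forall>\<beta>\<in>B. compatible h d \<beta>) \<and>
      (\<forall>a\<in>WB \<sigma> h B. val d f a > - \<infinity>) \<and>
      (\<forall>a\<in>Vmon' d f \<inter> WB \<sigma> h B. \<forall>i<q. a - of_nat i *s e \<in> Vmon f) \<and>
      (\<forall>a\<in>Vmon' d f \<inter> WB \<sigma> h B. \<forall>b\<in>Vmon' d f \<inter> WB \<sigma> h B.
          a - b \<notin> {s - e | s. s \<in> semigrp \<sigma>}) \<and>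
      I = ideal_gen \<sigma> {xmon a | a. a \<in> Vmon' d f \<inter> WB \<sigma> h B} \<and>
      Exp \<sigma> I = {a \<in> WB \<sigma> h B. pval d f a \<ge> 0}"
proof (intro exI[of _ Bset] conjI)
  show "\<forall>\<beta>\<in>Bset. compatible h d \<beta>" by (simp add: Bset_def)
  show "\<forall>a\<in>WB \<sigma> h Bset. val d f a > - \<infinity>"
  proof
    fix a assume "a \<in> WB \<sigma> h Bset"
    then obtain M where "val d f a = ereal (real_of_int (M - int q + 1) / real q)"
      using line_struct WB_line by blast
    then show "val d f a > - \<infinity>" by simp
  qed
  show "\<forall>a\<in>Vmon' d f \<inter> WB \<sigma> h Bset. \<forall>i<q. a - of_nat i *s e \<in> Vmon f"
    using Vtop by blast
  show "\<forall>a\<in>Vmon' d f \<inter> WB \<sigma> h Bset. \<forall>b\<in>Vmon' d f \<inter> WB \<sigma> h Bset.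
          a - b \<notin> {s - e | s. s \<in> semigrp \<sigma>}"
  proof (intro ballI notI)
    fix a b assume a: "a \<in> Vmon' d f \<inter> WB \<sigma> h Bset" and b: "b \<in> Vmon' d f \<inter> WB \<sigma> h Bset"
      and ab: "a - b \<in> {s - e | s. s \<in> semigrp \<sigma>}"
    obtain s where s: "s \<in> S" "a - b = s - e" using ab by blast
    have "b \<in> E" using Vtop b by blast
    then have "b + s \<in> E" using s(1) by (rule E_up)
    moreover have "b + s = a + e" using s(2) by (simp add: algebra_simps eq_diff_eq)
    ultimately show False using Vtop a by auto
  qed
  show "I = ideal_gen \<sigma> {xmon a | a. a \<in> Vmon' d f \<inter> WB \<sigma> h Bset}"
  proof
    show "ideal_gen \<sigma> {xmon a | a. a \<in> Vmon' d f \<inter> WB \<sigma> h Bset} \<subseteq> I"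
    proof -
      have "{xmon a | a. a \<in> Vmon' d f \<inter> WB \<sigma> h Bset} \<subseteq> I"
        using Vtop E_iff by blast
      then show ?thesis using I_ideal unfolding ideal_gen_def by blast
    qed
  next
    show "I \<subseteq> ideal_gen \<sigma> {xmon a | a. a \<in> Vmon' d f \<inter> WB \<sigma> h Bset}"
    proof
      fix p assume p: "p \<in> I"
      show "p \<in> ideal_gen \<sigma> {xmon a | a. a \<in> Vmon' d f \<inter> WB \<sigma> h Bset}"
        unfolding ideal_gen_def
      proof (rule InterI)
        fix J assume "J \<in> {J. is_ideal \<sigma> J \<and> {xmon a | a. a \<in> Vmon' d f \<inter> WB \<sigma> h Bset} \<subseteq> J}"
        then have J: "is_ideal \<sigma> J" "{xmon a | a. a \<in> Vmon' d f \<inter> WB \<sigma> h Bset} \<subseteq> J" by auto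
        show "p \<in> J"
        proof (rule in_ideal_by_gens[OF J(1) keys_I[OF p]])
          fix x assume x: "x \<in> E"
          have "x + 0 *s e \<in> E" using x by simp
          then obtain M where M: "\<forall>j. x + j *s e \<in> E \<longleftrightarrow> j \<le> M"
            "val d f x = ereal (real_of_int (M - int q + 1) / real q)" "vpt d f x = x + M *s e"
            using line_struct by blast
          have M0: "0 \<le> M" using M(1) x by (metis add.right_neutral vector_smult_lzero)
          define t where "t = x + M *s e"
          have "t \<in> Vmon' d f" unfolding Vmon'_def t_def using M(2,3)
            by (intro CollectI exI[of _ x]) simp
          moreover have "t \<in> E" using M(1) by (simp add: t_def)
          ultimately have "xmon t \<in> J" using J(2) E_WB by blast
          moreover have "M *s (- e) \<in> S" using M0 by (rule S_smult_negE)
          moreover have "x = M *s (- e) + t" by (simp add: t_def vec_eq_iff)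
          ultimately show "\<exists>s m. s \<in> S \<and> x = s + m \<and> xmon m \<in> J" by blast
        qed
      qed
    qed
  qed
  show "Exp \<sigma> I = {a \<in> WB \<sigma> h Bset. pval d f a \<ge> 0}"
  proof
    show "Exp \<sigma> I \<subseteq> {a \<in> WB \<sigma> h Bset. pval d f a \<ge> 0}"
    proof
      fix x assume "x \<in> Exp \<sigma> I"
      then have x: "x \<in> E" by (simp add: E_def)
      have "x + 0 *s e \<in> E" using x by simp
      then obtain M where M: "\<forall>j. x + j *s e \<in> E \<longleftrightarrow> j \<le> M" "pval d f x = real_of_int M / real q"
        using line_struct by blast
      have M0: "0 \<le> M" using M(1) x by (metis add.right_neutral vector_smult_lzero)
      then have "pval d f x \<ge> 0" using M(2) by simp
      then show "x \<in> {a \<in> WB \<sigma> h Bset. pval d f a \<ge> 0}" using E_WB x by simp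
    qed
  next
    show "{a \<in> WB \<sigma> h Bset. pval d f a \<ge> 0} \<subseteq> Exp \<sigma> I"
    proof
      fix a assume a: "a \<in> {a \<in> WB \<sigma> h Bset. pval d f a \<ge> 0}"
      then obtain M where M: "\<forall>j. a + j *s e \<in> E \<longleftrightarrow> j \<le> M" "pval d f a = real_of_int M / real q"
        using line_struct WB_line by blast
      have "real_of_int M / real q \<ge> 0" using a M(2) by simp
      then have "0 \<le> M" using q_pos by (simp add: zero_le_divide_iff)
      then have "a + 0 *s e \<in> E" using M(1) by blast
      then show "a \<in> Exp \<sigma> I" by (simp add: E_def)
    qed
  qed
qed

end

theorem mainTheorem8:
  fixes \<sigma> :: "(real ^ 'd) set" and h :: "'i::finite \<Rightarrow> int ^ 'd"
    and d e :: "int ^ 'd" and q :: nat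
    and f :: "complex ^ 'd \<Rightarrow> complex" and I :: "'d laurent set"
  assumes toric: "toric_setup \<sigma> h"
    and fpoly: "poly_fun f"
    and fdiv: "poly_dvd (Hd h d) f"
    and d_nz: "d \<noteq> 0"
    and negd: "- d \<in> semigrp \<sigma>"
    and q_pos: "1 \<le> q"
    and e_prim: "primitive_vec e"
    and d_eq: "d = of_nat q *s e"
    and I_mon: "monomial_ideal \<sigma> I"
    and I_nz: "I \<noteq> {0}"
    and fixed: "delta d f ` I = I"
  shows "\<exists>B :: ('i \<Rightarrow> nat) set. (\<forall>\<beta>\<in>B. compatible h d \<beta>) \<and>
      (\<forall>a\<in>WB \<sigma> h B. val d f a > - \<infinity>) \<and>
      (\<forall>a\<in>Vmon' d f \<inter> WB \<sigma> h B. \<forall>i<q. a - of_nat i *s e \<in> Vmon f) \<and>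
      (\<forall>a\<in>Vmon' d f \<inter> WB \<sigma> h B. \<forall>b\<in>Vmon' d f \<inter> WB \<sigma> h B.
          a - b \<notin> {s - e | s. s \<in> semigrp \<sigma>}) \<and>
      I = ideal_gen \<sigma> {xmon a | a. a \<in> Vmon' d f \<inter> WB \<sigma> h B} \<and>
      Exp \<sigma> I = {a \<in> WB \<sigma> h B. pval d f a \<ge> 0}"
proof -
  interpret mt \<sigma> h d e q f I
    using toric d_nz negd q_pos e_prim d_eq I_mon I_nz fixed by unfold_locales
  show ?thesis by (rule main)
qed

end
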